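(* Let $n,k$ be positive integers with $n\ge 3k$, put $C=n/k$, and let $\mathcal F\subset\binom{[n]}{k}$ be an intersecting family with $|\mathcal D(\mathcal F)|>\sum_{0\le \ell<k}\binom{n-1}{\ell}$. Then $$|\mathcal D^{(k-1)}(\mathcal F)|>\Big(1-\frac{2}{(C-1)^2}\Big)\binom{n-1}{k-1}\quad\text{and}\quad |\mathcal D^{(k-1)}(\mathcal F)|\ge\Big(1-\frac 2C\Big)\binom{n}{k-1}.$$
   Context: $[n]=\{1,\dots,n\}$; $\binom{[n]}{k}$ is the family of all $k$-element subsets of $[n]$. A family $\mathcal F$ is intersecting if $F\cap F'\neq\varnothing$ for all $F,F'\in\mathcal F$. $\mathcal D(\mathcal F):=\{F\setminus F' : F,F'\in\mathcal F\}$ and $\mathcal D^{(\ell)}(\mathcal F):=\{D\in\mathcal D(\mathcal F): |D|=\ell\}$. *)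

theory Defs
  imports Main "HOL-Library.Multiset" Complex_Main
begin

definition intersecting :: "'a set set \<Rightarrow> bool" where
  "intersecting F \<longleftrightarrow> (\<forall>A\<in>F. \<forall>B\<in>F. A \<inter> B \<noteq> {})"

definition diff_family :: "'a set set \<Rightarrow> 'a set set" where
  "diff_family F = {A - B | A B. A \<in> F \<and> B \<in> F}"

definition diff_family_level :: "nat \<Rightarrow> 'a set set \<Rightarrow> 'a set set" where
  "diff_family_level l F = {D \<in> diff_family F. card D = l}"

end

theory Submission
  imports Defs
begin

lemma choose_step: "Suc t * (m choose Suc t) = (m - t) * (m choose t)"
  using binomial_absorption[of t m] binomial_absorb_comp[of m t] by simp

lemma sum_choose_Suc:
  "(\<Sum>l<Suc i. Suc m choose l) = (\<Sum>l<Suc i. m choose l) + (\<Sum>l<i. m choose l)"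
proof (induction i)
  case 0 then show ?case by simp
next
  case (Suc i)
  have "(\<Sum>l<Suc (Suc i). Suc m choose l) = (\<Sum>l<Suc i. Suc m choose l) + (Suc m choose Suc i)"
    by simp
  also have "\<dots> = (\<Sum>l<Suc i. m choose l) + (\<Sum>l<i. m choose l) + (m choose i) + (m choose Suc i)"
    using Suc by simp
  finally show ?case by simp
qed

lemma ratio:
  assumes "Suc t \<le> k - 1" "n \<ge> 3 * k"
  shows "real (n - 1 choose t) * real (n - k) \<le> real k * real (n - 1 choose Suc t)"
proof -
  have "(n - 1 choose t) * (n - k) \<le> (n - 1 choose t) * (n - 1 - t)"
    using assms by (intro mult_le_mono2) linarith
  also have "\<dots> = Suc t * (n - 1 choose Suc t)" using choose_step[of t "n-1"] by (simp add: mult.commute)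
  also have "\<dots> \<le> k * (n - 1 choose Suc t)" using assms by (intro mult_le_mono1) linarith
  finally have "(n - 1 choose t) * (n - k) \<le> k * (n - 1 choose Suc t)" .
  then show ?thesis by (metis of_nat_le_iff of_nat_mult)
qed

lemma geo:
  assumes "t \<le> k - 1" "n \<ge> 3 * k" "k \<ge> 1"
  shows "real (\<Sum>l<t. n - 1 choose l) \<le> 2 * (real k / real (n - k)) * real (n - 1 choose t)"
  using assms(1)
proof (induction t)
  case 0 then show ?case by simp
next
  case (Suc t)
  define r where "r = real k / real (n - k)"
  have nk: "real (n - k) > 0" using assms by simp
  have r0: "r \<ge> 0" and rh: "r \<le> 1/2" using assms nk unfolding r_def by (auto simp: field_simps)
  have rat: "real (n - 1 choose t) \<le> r * real (n - 1 choose Suc t)"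
    using ratio[OF Suc.prems assms(2)] nk unfolding r_def by (simp add: field_simps)
  have IH: "real (\<Sum>l<t. n - 1 choose l) \<le> 2 * r * real (n - 1 choose t)"
    using Suc r_def by simp
  have "real (\<Sum>l<Suc t. n - 1 choose l) = real (\<Sum>l<t. n - 1 choose l) + real (n - 1 choose t)"
    by simp
  also have "\<dots> \<le> (1 + 2 * r) * real (n - 1 choose t)" using IH by (simp add: algebra_simps)
  also have "\<dots> \<le> (1 + 2 * r) * (r * real (n - 1 choose Suc t))"
    using rat r0 by (intro mult_left_mono) auto
  also have "\<dots> \<le> 2 * r * real (n - 1 choose Suc t)"
  proof -
    have rr: "r * r \<le> r * (1/2)" using mult_left_mono[OF rh r0] .
    have "(1 + 2 * r) * r \<le> 2 * r" using rr by (simp add: algebra_simps)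
    then have "(1 + 2 * r) * r * real (n - 1 choose Suc t) \<le> 2 * r * real (n - 1 choose Suc t)"
      by (rule mult_right_mono) simp
    then show ?thesis by (simp add: mult.assoc)
  qed
  finally show ?case unfolding r_def .
qed

theorem mainTheorem7:
  fixes n k :: nat and F :: "nat set set"
  assumes "k \<ge> 1" and "n \<ge> 1" and "n \<ge> 3 * k"
    and "F \<subseteq> {A. A \<subseteq> {1..n} \<and> card A = k}"
    and "intersecting F"
    and "card (diff_family F) > (\<Sum>l<k. (n - 1) choose l)"
  shows "real (card (diff_family_level (k - 1) F))
           > (1 - 2 / (real n / real k - 1)^2) * real ((n - 1) choose (k - 1))
       \<and> real (card (diff_family_level (k - 1) F))
           \<ge> (1 - 2 / (real n / real k)) * real (n choose (k - 1))"
proof -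
  define j where "j = k - 1"
  define m where "m = n - 1"
  have kj: "k = Suc j" and nm: "n = Suc m" using assms(1,2) unfolding j_def m_def by simp_all
  define L where "L = diff_family_level j F"
  define Low where "Low = (\<Union>l<j. {D. D \<subseteq> {1..n} \<and> card D = l})"
  have memD: "D \<subseteq> {1..n} \<and> card D \<le> j" if hD: "D \<in> diff_family F" for D
  proof -
    obtain A B where D: "D = A - B" and AB: "A \<in> F" "B \<in> F" using hD unfolding diff_family_def by blast
    have A: "A \<subseteq> {1..n}" "card A = k" using AB(1) assms(4) by blast+
    have fA: "finite A" by (rule finite_subset[OF A(1)]) simp
    have "A \<inter> B \<noteq> {}" using assms(5) AB unfolding intersecting_def by blast
    hence "card (A \<inter> B) \<ge> 1" using fA by (simp add: Suc_le_eq card_gt_0_iff)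
    moreover have "card (A - B) = card A - card (A \<inter> B)"
      using fA by (intro card_Diff_subset_Int) simp
    ultimately have "card D \<le> j" using A D kj by simp
    then show ?thesis using A D by auto
  qed
  have sub: "diff_family F \<subseteq> L \<union> Low"
  proof
    fix D assume D: "D \<in> diff_family F"
    show "D \<in> L \<union> Low"
    proof (cases "card D = j")
      case True then show ?thesis using D unfolding L_def diff_family_level_def by auto
    next
      case False then show ?thesis using memD[OF D] unfolding Low_def by auto
    qed
  qed
  have finL: "finite L"
  proof -
    have "L \<subseteq> Pow {1..n}" using memD unfolding L_def diff_family_level_def by auto
    then show ?thesis using finite_subset by blast
  qed
  have cLow: "card Low \<le> (\<Sum>l<j. n choose l)"
  proof -
    have "card Low \<le> (\<Sum>l<j. card {D. D \<subseteq> {1..n} \<and> card D = l})"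
      unfolding Low_def by (rule card_UN_le) simp
    also have "\<dots> = (\<Sum>l<j. n choose l)" using n_subsets[of "{1..n::nat}"] by simp
    finally show ?thesis .
  qed
  have finLow: "finite Low" unfolding Low_def by auto
  have "card (diff_family F) \<le> card (L \<union> Low)"
    using sub finL finLow by (intro card_mono) auto
  also have "\<dots> \<le> card L + card Low" by (rule card_Un_le)
  finally have c1: "card (diff_family F) \<le> card L + (\<Sum>l<j. n choose l)" using cLow by linarith
  define S where "S = (\<Sum>l<j - 1. m choose l)"
  define B where "B = m choose j"
  have idn: "(\<Sum>l<j. n choose l) = (\<Sum>l<j. m choose l) + S"
  proof (cases j)
    case 0 then show ?thesis unfolding S_def by simp
  next
    case (Suc i) then show ?thesis unfolding S_def nm using sum_choose_Suc[where i=i and m=m] by simp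
  qed
  have idk: "(\<Sum>l<k. (n - 1) choose l) = (\<Sum>l<j. m choose l) + B"
    unfolding kj B_def m_def by simp
  have Lgt: "card L + S > B" using c1 idn idk assms(6) by linarith
  define r where "r = real k / real (n - k)"
  have nk: "real (n - k) > 0" using assms by simp
  have r0: "r \<ge> 0" and rh: "r \<le> 1/2" using assms nk unfolding r_def by (auto simp: field_simps)
  have Sb: "real S \<le> 2 * r * r * real B"
  proof (cases j)
    case 0 then show ?thesis unfolding S_def using r0 by simp
  next
    case (Suc i)
    have g: "real S \<le> 2 * r * real (m choose i)"
      using geo[of i k n] assms Suc unfolding S_def r_def m_def j_def by simp
    have "real (m choose i) \<le> r * real B"
      using ratio[of i k n] assms Suc nk unfolding B_def r_def m_def j_def by (simp add: field_simps)
    hence "2 * r * real (m choose i) \<le> 2 * r * (r * real B)" using r0 by (intro mult_left_mono) auto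
    with g show ?thesis by simp
  qed
  have Lr: "real (card L) > real B - real S" using Lgt by linarith
  have e1: "2 / (real n / real k - 1)^2 = 2 * r * r"
  proof -
    have "real n / real k - 1 = real (n - k) / real k" using assms by (simp add: field_simps of_nat_diff)
    then show ?thesis unfolding r_def by (simp add: power2_eq_square)
  qed
  have part1: "real (card L) > (1 - 2 * r * r) * real B" using Lr Sb by (simp add: algebra_simps)
  have part2: "real (card L) \<ge> (1 - 2 / (real n / real k)) * real (n choose j)"
  proof -
    have abs: "(n - j) * (n choose j) = n * B" unfolding B_def m_def using binomial_absorb_comp .
    have nj: "real (n - j) = real (n - k) + 1" using assms kj by (simp add: of_nat_diff)
    define q where "q = real (n - k)"
    have q: "q \<ge> 2 * real k" unfolding q_def using assms by (simp add: of_nat_diff)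
    have kpos: "real k \<ge> 1" using assms by simp
    have ineq: "2 * r * r \<le> (real k + 1) / (q + 1)"
    proof -
      have "2 * real k * real k * (q + 1) \<le> (real k + 1) * (q * q)"
      proof -
        have "(real k + 1) * (q * q) \<ge> (real k + 1) * (2 * real k * q)"
          using q kpos by (intro mult_left_mono) (auto intro: mult_right_mono)
        moreover have "2 * real k * q \<ge> 2 * real k * real k" using q kpos by auto
        ultimately show ?thesis by (simp add: algebra_simps)
      qed
      then show ?thesis using q kpos unfolding r_def q_def[symmetric] by (simp add: field_simps)
    qed
    have Cn: "real (n choose j) = real n * real B / (q + 1)"
      using arg_cong[OF abs, of real] nj q kpos unfolding q_def[symmetric] by (simp add: field_simps)
    have "(1 - 2 / (real n / real k)) * real (n choose j) = (real n - 2 * real k) * real B / (q + 1)"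
    proof -
      have n0: "real n > 0" and q1: "q + 1 > 0" using assms q kpos by auto
      have "(1 - 2 / (real n / real k)) = (real n - 2 * real k) / real n" using n0 kpos by (simp add: field_simps)
      then show ?thesis using Cn n0 q1 by simp
    qed
    also have "\<dots> = (1 - (real k + 1) / (q + 1)) * real B"
      using q assms unfolding q_def by (simp add: field_simps of_nat_diff)
    also have "\<dots> \<le> (1 - 2 * r * r) * real B" using ineq by (intro mult_right_mono) auto
    also have "\<dots> \<le> real (card L)" using part1 by simp
    finally show ?thesis .
  qed
  show ?thesis using part1 part2 e1 unfolding L_def j_def B_def m_def by simp
qed

end
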